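(* Consider the gossip dynamics with stubborn agents and block communication probabilities described in the context (with $0<n_{r1}\le n_1$, $0<n_{r2}\le n_2$, $n_{r1}+n_{r2}<n$, $w_s,w_d>0$, $w_s\neq w_d$, $w_s(n_1^2+n_2^2)+2w_dn_1n_2=1$, and fixed stubborn initial vector $\mathbf{x}^s=x^s(0)=[(\mathbf{x}^{s1})^T\ (\mathbf{x}^{s2})^T]^T$, where $\mathbf{x}^{sk}$ stacks the states of stubborn agents of community $k$). Then, with $a_i=w_sn_i+w_dn_{3-i}$ for $i=1,2$, there exist constants $\tilde w_{s1},\tilde w_{s2},\tilde w_d$ depending only on $w_s,w_d,n_{r1},n_{r2}$ such that $$(I-\bar A)^{-1}=\begin{bmatrix}\frac1{a_1}(I_{n_{r1}}-\tilde w_{s1}\mathbf{1}_{n_{r1}}\mathbf{1}_{n_{r1}}^T) & \tilde w_d\mathbf{1}_{n_{r1}}\mathbf{1}_{n_{r2}}^T\\ \tilde w_d\mathbf{1}_{n_{r2}}\mathbf{1}_{n_{r1}}^T & \frac1{a_2}(I_{n_{r2}}-\tilde w_{s2}\mathbf{1}_{n_{r2}}\mathbf{1}_{n_{r2}}^T)\end{bmatrix}$$ (block decomposition by regular agents of community 1, then community 2). Consequently $$\mathbf{x}^r:=(I-\bar A)^{-1}\bar B\mathbf{x}^s=[\chi_1\mathbf{1}_{n_{r1}}^T,\ \chi_2\mathbf{1}_{n_{r2}}^T]^T,$$ where $$\chi_1=\tfrac1\delta(\gamma_{11}\mathbf{1}_{n_{s1}}^T\mathbf{x}^{s1}+\gamma_{12}\mathbf{1}_{n_{s2}}^T\mathbf{x}^{s2}),\qquad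 \chi_2=\tfrac1\delta(\gamma_{21}\mathbf{1}_{n_{s2}}^T\mathbf{x}^{s2}+\gamma_{22}\mathbf{1}_{n_{s1}}^T\mathbf{x}^{s1}),$$ with $\gamma_{11}=w_sw_dn_1+w_d^2n_{r2}+w_s^2n_{s2}$, $\gamma_{12}=w_d(w_dn_1+w_sn_2)$, $\gamma_{21}=w_sw_dn_2+w_d^2n_{r1}+w_s^2n_{s1}$, $\gamma_{22}=w_d(w_dn_2+w_sn_1)$, $\delta=w_s^2n_{s1}n_{s2}+w_sw_d(n_1n_{s1}+n_2n_{s2})+w_d^2(n_1n_2-n_{r1}n_{r2})$, and $\mathbf{1}_{n_{sk}}^T\mathbf{x}^{sk}$ is defined to be $0$ if $n_{sk}=0$.
   Context: Agents $\mathcal{V}=\{1,\dots,n\}$, $n=n_1+n_2$, form two communities $\mathcal{V}_1=\{1,\dots,n_1\}$, $\mathcal{V}_2=\{n_1+1,\dots,n\}$; community $k$ consists of $n_{rk}$ regular agents $\mathcal{V}_{rk}$ and $n_{sk}=n_k-n_{rk}$ stubborn agents $\mathcal{V}_{sk}$; $\mathcal{V}_r=\mathcal{V}_{r1}\cup\mathcal{V}_{r2}$, $\mathcal{V}_s=\mathcal{V}_{s1}\cup\mathcal{V}_{s2}$. Let $w_{ij}=w_s$ if $i,j$ are in the same community and $w_{ij}=w_d$ otherwise. For $i,j\in\mathcal{V}$ define $R^{ij}=I-\frac12(\mathbf{e}_i-\mathbf{e}_j)(\mathbf{e}_i-\mathbf{e}_j)^T$ if $i,j\in\mathcal{V}_r$;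 $R^{ij}=I-\frac12\mathbf{e}_i(\mathbf{e}_i-\mathbf{e}_j)^T$ if $i\in\mathcal{V}_r,j\in\mathcal{V}_s$; $R^{ij}=I-\frac12\mathbf{e}_j(\mathbf{e}_j-\mathbf{e}_i)^T$ if $i\in\mathcal{V}_s,j\in\mathcal{V}_r$; $R^{ij}=I$ if $i,j\in\mathcal{V}_s$. At each time $t\in\mathbb{N}$, independently, an ordered pair $(i,j)$ is drawn with probability $w_{ij}$ and $R(t)=R^{ij}$; states evolve by $x(t+1)=R(t)x(t)$. With $x^r(t)$, $x^s(t)$ the stacked states of regular and stubborn agents, $x^r(t+1)=A(t)x^r(t)+B(t)x^s(t)$, where $(A(t)\ B(t))$ are the rows of $R(t)$ indexed by regular agents, columns split into regular ($A(t)$) and stubborn ($B(t)$) agents. $\bar A=\mathbb{E}\{A(t)\}$, $\bar B=\mathbb{E}\{B(t)\}$. *)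

theory Defs
  imports "Jordan_Normal_Form.Matrix"
begin

text \<open>Agents are labelled 0..n-1 (n = n1+n2). Community 1 = {0..<n1}, community 2 = {n1..<n}.
Labelling convention: regular agents of community 1 are {0..<nr1}, its stubborn agents {nr1..<n1};
regular agents of community 2 are {n1..<n1+nr2}, its stubborn agents {n1+nr2..<n}.\<close>

definition ones_vec :: "nat \<Rightarrow> real vec" where
  "ones_vec k = vec k (\<lambda>_. 1)"

definition outer :: "real vec \<Rightarrow> real vec \<Rightarrow> real mat" where
  "outer u v = mat (dim_vec u) (dim_vec v) (\<lambda>(p,q). u $ p * v $ q)"

definition is_regular :: "nat \<Rightarrow> nat \<Rightarrow> nat \<Rightarrow> nat \<Rightarrow> bool" where
  "is_regular n1 nr1 nr2 i \<longleftrightarrow> i < nr1 \<or> (n1 \<le> i \<and> i < n1 + nr2)"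

definition wgt :: "real \<Rightarrow> real \<Rightarrow> nat \<Rightarrow> nat \<Rightarrow> nat \<Rightarrow> real" where
  "wgt ws wd n1 i j = (if (i < n1) = (j < n1) then ws else wd)"

definition Rmat :: "nat \<Rightarrow> nat \<Rightarrow> nat \<Rightarrow> nat \<Rightarrow> nat \<Rightarrow> nat \<Rightarrow> real mat" where
  "Rmat n n1 nr1 nr2 i j =
     (let ei = unit_vec n i; ej = unit_vec n j; reg = is_regular n1 nr1 nr2 in
      if reg i \<and> reg j then 1\<^sub>m n - (1/2) \<cdot>\<^sub>m outer (ei - ej) (ei - ej)
      else if reg i \<and> \<not> reg j then 1\<^sub>m n - (1/2) \<cdot>\<^sub>m outer ei (ei - ej)
      else if \<not> reg i \<and> reg j then 1\<^sub>m n - (1/2) \<cdot>\<^sub>m outer ej (ej - ei)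
      else 1\<^sub>m n)"

definition Rbar :: "real \<Rightarrow> real \<Rightarrow> nat \<Rightarrow> nat \<Rightarrow> nat \<Rightarrow> nat \<Rightarrow> real mat" where
  "Rbar ws wd n1 n2 nr1 nr2 =
     mat (n1+n2) (n1+n2) (\<lambda>(p,q). \<Sum>i<n1+n2. \<Sum>j<n1+n2.
        wgt ws wd n1 i j * Rmat (n1+n2) n1 nr1 nr2 i j $$ (p,q))"

definition reg_idx :: "nat \<Rightarrow> nat \<Rightarrow> nat \<Rightarrow> nat" where
  "reg_idx n1 nr1 p = (if p < nr1 then p else n1 + (p - nr1))"

definition stub_idx :: "nat \<Rightarrow> nat \<Rightarrow> nat \<Rightarrow> nat \<Rightarrow> nat" where
  "stub_idx n1 nr1 nr2 q = (if q < n1 - nr1 then nr1 + q else n1 + nr2 + (q - (n1 - nr1)))"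

definition Abar :: "real \<Rightarrow> real \<Rightarrow> nat \<Rightarrow> nat \<Rightarrow> nat \<Rightarrow> nat \<Rightarrow> real mat" where
  "Abar ws wd n1 n2 nr1 nr2 = mat (nr1+nr2) (nr1+nr2)
     (\<lambda>(p,q). Rbar ws wd n1 n2 nr1 nr2 $$ (reg_idx n1 nr1 p, reg_idx n1 nr1 q))"

definition Bbar :: "real \<Rightarrow> real \<Rightarrow> nat \<Rightarrow> nat \<Rightarrow> nat \<Rightarrow> nat \<Rightarrow> real mat" where
  "Bbar ws wd n1 n2 nr1 nr2 = mat (nr1+nr2) ((n1 - nr1) + (n2 - nr2))
     (\<lambda>(p,q). Rbar ws wd n1 n2 nr1 nr2 $$ (reg_idx n1 nr1 p, stub_idx n1 nr1 nr2 q))"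

end

theory Submission
  imports Defs
begin

definition bm :: "nat \<Rightarrow> nat \<Rightarrow> (bool \<Rightarrow> real) \<Rightarrow> (bool \<Rightarrow> bool \<Rightarrow> real) \<Rightarrow> real mat" where
  "bm r1 r2 d e = mat (r1+r2) (r1+r2) (\<lambda>(i,j). (if i = j then d (i<r1) else 0) + e (i<r1) (j<r1))"

lemma sum_split_r:
  fixes f :: "nat \<Rightarrow> real"
  shows "(\<Sum>j<r1+r2. f j) = (\<Sum>j<r1. f j) + (\<Sum>j\<in>{r1..<r1+r2}. f j)"
  by (metis add.commute lessThan_atLeast0 sum.atLeastLessThan_concat zero_le le_add2)

lemma sum_const_blocks:
  fixes g :: "bool \<Rightarrow> real"
  shows "(\<Sum>j<k+l. g (j<k)) = real k * g True + real l * g False"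
proof -
  have "(\<Sum>j<k+l. g (j<k)) = (\<Sum>j<k. g (j<k)) + (\<Sum>j\<in>{k..<k+l}. g (j<k))"
    by (rule sum_split_r)
  also have "(\<Sum>j<k. g (j<k)) = real k * g True" by simp
  also have "(\<Sum>j\<in>{k..<k+l}. g (j<k)) = real l * g False" by simp
  finally show ?thesis .
qed

lemma bm_mult:
  "bm r1 r2 d e * bm r1 r2 d' e' = bm r1 r2 (\<lambda>x. d x * d' x)
     (\<lambda>x y. d x * e' x y + e x y * d' y + real r1 * e x True * e' True y + real r2 * e x False * e' False y)"
proof (rule eq_matI)
  fix i k assume i: "i < dim_row (bm r1 r2 (\<lambda>x. d x * d' x) (\<lambda>x y. d x * e' x y + e x y * d' y + real r1 * e x True * e' True y + real r2 * e x False * e' False y))"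
    and k: "k < dim_col (bm r1 r2 (\<lambda>x. d x * d' x) (\<lambda>x y. d x * e' x y + e x y * d' y + real r1 * e x True * e' True y + real r2 * e x False * e' False y))"
  then have i': "i < r1+r2" and k': "k < r1+r2" by (auto simp: bm_def)
  have "(bm r1 r2 d e * bm r1 r2 d' e') $$ (i,k) =
     (\<Sum>j<r1+r2. ((if i = j then d (i<r1) else 0) + e (i<r1) (j<r1)) * ((if j = k then d' (j<r1) else 0) + e' (j<r1) (k<r1)))"
    using i' k' by (simp add: bm_def scalar_prod_def lessThan_atLeast0)
  also have "\<dots> = (\<Sum>j<r1+r2. (if j = i then d (i<r1) * ((if j = k then d' (j<r1) else 0) + e' (j<r1) (k<r1)) else 0))
      + (\<Sum>j<r1+r2. (if j = k then e (i<r1) (j<r1) * d' (j<r1) else 0))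
      + (\<Sum>j<r1+r2. e (i<r1) (j<r1) * e' (j<r1) (k<r1))"
    unfolding sum.distrib[symmetric] by (rule sum.cong) (auto simp: algebra_simps)
  also have "\<dots> = (if i = k then d (i<r1) * d' (i<r1) else 0) + d (i<r1) * e' (i<r1) (k<r1)
      + e (i<r1) (k<r1) * d' (k<r1)
      + (real r1 * (e (i<r1) True * e' True (k<r1)) + real r2 * (e (i<r1) False * e' False (k<r1)))"
    using i' k' by (simp add: sum_const_blocks[where g="\<lambda>b. e (i<r1) b * e' b (k<r1)"] algebra_simps)
  finally show "(bm r1 r2 d e * bm r1 r2 d' e') $$ (i,k) = bm r1 r2 (\<lambda>x. d x * d' x)
     (\<lambda>x y. d x * e' x y + e x y * d' y + real r1 * e x True * e' True y + real r2 * e x False * e' False y) $$ (i,k)"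
    using i' k' by (simp add: bm_def algebra_simps)
qed (auto simp: bm_def)

lemma bm_mult_vec:
  "bm r1 r2 d e *\<^sub>v vec (r1+r2) (\<lambda>j. c (j<r1)) = vec (r1+r2) (\<lambda>i. d (i<r1) * c (i<r1)
      + real r1 * e (i<r1) True * c True + real r2 * e (i<r1) False * c False)"
proof (rule eq_vecI)
  fix i assume "i < dim_vec (vec (r1+r2) (\<lambda>i. d (i<r1) * c (i<r1)
      + real r1 * e (i<r1) True * c True + real r2 * e (i<r1) False * c False))"
  then have i: "i < r1+r2" by simp
  have "(bm r1 r2 d e *\<^sub>v vec (r1+r2) (\<lambda>j. c (j<r1))) $ i
     = (\<Sum>j<r1+r2. (if j = i then d (i<r1) * c (j<r1) else 0) + e (i<r1) (j<r1) * c (j<r1))"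
    using i by (simp add: bm_def scalar_prod_def lessThan_atLeast0) (rule sum.cong, auto simp: algebra_simps)
  also have "\<dots> = d (i<r1) * c (i<r1) + (real r1 * (e (i<r1) True * c True) + real r2 * (e (i<r1) False * c False))"
    using i by (simp add: sum.distrib sum_const_blocks[where g="\<lambda>b. e (i<r1) b * c b"])
  finally show "(bm r1 r2 d e *\<^sub>v vec (r1+r2) (\<lambda>j. c (j<r1))) $ i = vec (r1+r2) (\<lambda>i. d (i<r1) * c (i<r1)
      + real r1 * e (i<r1) True * c True + real r2 * e (i<r1) False * c False) $ i"
    using i by (simp add: algebra_simps)
qed (simp add: bm_def)

lemma Rmat_reg:
  assumes "is_regular n1 nr1 nr2 p" "p<n" "q<n" "i<n" "j<n"
  shows "Rmat n n1 nr1 nr2 i j $$ (p,q) = (if p=q then 1 else 0)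
     - 1/2 * ((if i=p then 1 else 0) - (if j=p then 1 else 0)) * ((if i=q then 1 else 0) - (if j=q then 1 else 0))"
  using assms by (auto simp: Rmat_def Let_def outer_def)

lemma wgt_sym: "wgt ws wd n1 i j = wgt ws wd n1 j i"
  by (auto simp: wgt_def)

lemma wgt_rowsum:
  assumes "p < n1+n2"
  shows "(\<Sum>j<n1+n2. wgt ws wd n1 p j) = (if p < n1 then ws * real n1 + wd * real n2 else wd * real n1 + ws * real n2)"
  using sum_const_blocks[where g="\<lambda>b. if (p<n1) = b then ws else wd" and k=n1 and l=n2]
  by (simp add: wgt_def)

lemma wgt_total:
  "(\<Sum>i<n1+n2. \<Sum>j<n1+n2. wgt ws wd n1 i j) = ws * (real n1 ^ 2 + real n2 ^ 2) + 2 * wd * real n1 * real n2"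
proof -
  have "(\<Sum>i<n1+n2. \<Sum>j<n1+n2. wgt ws wd n1 i j) = (\<Sum>i<n1+n2. (if i < n1 then ws * real n1 + wd * real n2 else wd * real n1 + ws * real n2))"
    by (rule sum.cong) (auto simp: wgt_rowsum)
  also have "\<dots> = real n1 * (ws * real n1 + wd * real n2) + real n2 * (wd * real n1 + ws * real n2)"
    using sum_const_blocks[where g="\<lambda>b. if b then ws * real n1 + wd * real n2 else wd * real n1 + ws * real n2" and k=n1 and l=n2]
    by simp
  finally show ?thesis by (simp add: power2_eq_square algebra_simps)
qed

lemma s1: "(\<Sum>i<(n::nat). \<Sum>j<n. if i = p then f j else (0::real)) = (if p<n then \<Sum>j<n. f j else 0)"
proof -
  have "(\<Sum>i<n. \<Sum>j<n. if i = p then f j else (0::real)) = (\<Sum>i<n. if i = p then (\<Sum>j<n. f j) else 0)"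
    by (rule sum.cong) auto
  then show ?thesis by simp
qed
lemma s2: "(\<Sum>i<(n::nat). \<Sum>j<n. if j = p then f i else (0::real)) = (if p<n then \<Sum>i<n. f i else 0)"
proof -
  have "(\<Sum>i<n. \<Sum>j<n. if j = p then f i else (0::real)) = (\<Sum>i<n. if p < n then f i else 0)"
    by (rule sum.cong) auto
  then show ?thesis by simp
qed

lemma Rbar_reg:
  assumes "is_regular n1 nr1 nr2 p" "p<n1+n2" "q<n1+n2"
    and tot: "ws * (real n1 ^ 2 + real n2 ^ 2) + 2 * wd * real n1 * real n2 = 1"
  shows "Rbar ws wd n1 n2 nr1 nr2 $$ (p,q) = (if p = q then 1 - (\<Sum>j<n1+n2. wgt ws wd n1 p j) else 0) + wgt ws wd n1 p q"
proof -
  let ?w = "wgt ws wd n1"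
  let ?n = "n1+n2"
  have "Rbar ws wd n1 n2 nr1 nr2 $$ (p,q) = (\<Sum>i<?n. \<Sum>j<?n. ?w i j * Rmat ?n n1 nr1 nr2 i j $$ (p,q))"
    using assms by (simp add: Rbar_def)
  also have "\<dots> = (\<Sum>i<?n. \<Sum>j<?n. (if p = q then ?w i j else 0)
       - 1/2 * (if i = p then (if p = q then ?w p j else 0) else 0)
       + 1/2 * (if i = p then (if j = q then ?w p q else 0) else 0)
       + 1/2 * (if i = q then (if j = p then ?w p q else 0) else 0)
       - 1/2 * (if j = p then (if p = q then ?w i p else 0) else 0))"
    apply (rule sum.cong, simp, rule sum.cong, simp)
    using assms by (auto simp: Rmat_reg wgt_sym algebra_simps)
  also have "\<dots> = (\<Sum>i<?n. \<Sum>j<?n. (if p = q then ?w i j else 0))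
       - 1/2 * (\<Sum>i<?n. \<Sum>j<?n. (if i = p then (if p = q then ?w p j else 0) else 0))
       + 1/2 * (\<Sum>i<?n. \<Sum>j<?n. (if i = p then (if j = q then ?w p q else 0) else 0))
       + 1/2 * (\<Sum>i<?n. \<Sum>j<?n. (if i = q then (if j = p then ?w p q else 0) else 0))
       - 1/2 * (\<Sum>i<?n. \<Sum>j<?n. (if j = p then (if p = q then ?w i p else 0) else 0))"
    unfolding sum_distrib_left sum.distrib[symmetric] sum_subtractf[symmetric] by simp
  also have "\<dots> = (if p = q then 1 else 0)
       - 1/2 * (if p = q then (\<Sum>j<?n. ?w p j) else 0)
       + 1/2 * ?w p q + 1/2 * ?w p q
       - 1/2 * (if p = q then (\<Sum>i<?n. ?w i p) else 0)"
    using assms wgt_total[of ws wd n1 n2]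
    by (simp add: s1[where f="\<lambda>j. if p = q then ?w p j else 0"] s1[where f="\<lambda>j. if j = q then ?w p q else 0"]
       s1[where f="\<lambda>j. if j = p then ?w p q else 0"] s2[where f="\<lambda>i. if p = q then ?w i p else 0"])
  also have "(\<Sum>i<?n. ?w i p) = (\<Sum>j<?n. ?w p j)" by (simp add: wgt_sym)
  finally show ?thesis by (cases "p = q") (simp_all add: algebra_simps)
qed

lemma bm_cong: "(\<And>x. d x = d' x) \<Longrightarrow> (\<And>x y. e x y = e' x y) \<Longrightarrow> bm r1 r2 d e = bm r1 r2 d' e'"
  by (metis ext)

lemma one_bm: "1\<^sub>m (r1+r2) = bm r1 r2 (\<lambda>_. 1) (\<lambda>_ _. 0)"
  by (rule eq_matI) (auto simp: bm_def)

lemma reg_idx_facts: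
  assumes "p < nr1 + nr2" "nr1 \<le> n1" "nr2 \<le> n2"
  shows "reg_idx n1 nr1 p < n1 + n2" "is_regular n1 nr1 nr2 (reg_idx n1 nr1 p)"
    "(reg_idx n1 nr1 p < n1) = (p < nr1)"
  using assms by (auto simp: reg_idx_def is_regular_def)

lemma reg_idx_inj:
  assumes "p < nr1 + nr2" "q < nr1 + nr2" "nr1 \<le> n1"
  shows "(reg_idx n1 nr1 p = reg_idx n1 nr1 q) = (p = q)"
  using assms by (auto simp: reg_idx_def)

lemma IA_bm:
  assumes "nr1 \<le> n1" "nr2 \<le> n2"
    and tot: "ws * (real n1 ^ 2 + real n2 ^ 2) + 2 * wd * real n1 * real n2 = 1"
  shows "1\<^sub>m (nr1+nr2) - Abar ws wd n1 n2 nr1 nr2 = bm nr1 nr2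
     (\<lambda>b. if b then ws * real n1 + wd * real n2 else wd * real n1 + ws * real n2)
     (\<lambda>x y. - (if x = y then ws else wd))"
proof (rule eq_matI)
  fix p q assume "p < dim_row (bm nr1 nr2
     (\<lambda>b. if b then ws * real n1 + wd * real n2 else wd * real n1 + ws * real n2)
     (\<lambda>x y. - (if x = y then ws else wd)))" "q < dim_col (bm nr1 nr2
     (\<lambda>b. if b then ws * real n1 + wd * real n2 else wd * real n1 + ws * real n2)
     (\<lambda>x y. - (if x = y then ws else wd)))"
  then have p: "p < nr1+nr2" and q: "q < nr1+nr2" by (auto simp: bm_def)
  note fp = reg_idx_facts[OF p assms(1,2)] and fq = reg_idx_facts[OF q assms(1,2)]
  show "(1\<^sub>m (nr1+nr2) - Abar ws wd n1 n2 nr1 nr2) $$ (p,q) = bm nr1 nr2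
     (\<lambda>b. if b then ws * real n1 + wd * real n2 else wd * real n1 + ws * real n2)
     (\<lambda>x y. - (if x = y then ws else wd)) $$ (p,q)"
    using p q fp fq reg_idx_inj[OF p q assms(1)]
    by (simp add: Abar_def bm_def Rbar_reg[OF fp(2) fp(1) fq(1) tot] wgt_rowsum[OF fp(1)] wgt_rowsum[OF fq(1)])
      (simp add: wgt_def)
qed (auto simp: bm_def Abar_def)

lemma M_bm:
  "four_block_mat
     ((1/a1) \<cdot>\<^sub>m (1\<^sub>m nr1 - t1 \<cdot>\<^sub>m outer (ones_vec nr1) (ones_vec nr1)))
     (tw \<cdot>\<^sub>m outer (ones_vec nr1) (ones_vec nr2))
     (tw \<cdot>\<^sub>m outer (ones_vec nr2) (ones_vec nr1))
     ((1/a2) \<cdot>\<^sub>m (1\<^sub>m nr2 - t2 \<cdot>\<^sub>m outer (ones_vec nr2) (ones_vec nr2)))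
   = bm nr1 nr2 (\<lambda>b. if b then 1/a1 else 1/a2)
       (\<lambda>x y. if x \<and> y then - t1/a1 else if \<not> x \<and> \<not> y then - t2/a2 else tw)"
  by (rule eq_matI) (auto simp: bm_def outer_def ones_vec_def diff_divide_distrib)

lemma stub_idx_lt:
  assumes "q < (n1 - nr1) + (n2 - nr2)" "nr1 \<le> n1"
  shows "(stub_idx n1 nr1 nr2 q < n1) = (q < n1 - nr1)"
  using assms by (auto simp: stub_idx_def)

lemma stub_idx_facts:
  assumes "q < (n1 - nr1) + (n2 - nr2)" "nr1 \<le> n1" "nr2 \<le> n2" "p < nr1 + nr2"
  shows "stub_idx n1 nr1 nr2 q < n1 + n2" "reg_idx n1 nr1 p \<noteq> stub_idx n1 nr1 nr2 q"
  using assms by (auto simp: stub_idx_def reg_idx_def)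

lemma Bbar_vec:
  assumes "nr1 \<le> n1" "nr2 \<le> n2" and dx: "dim_vec xs = (n1 - nr1) + (n2 - nr2)"
    and tot: "ws * (real n1 ^ 2 + real n2 ^ 2) + 2 * wd * real n1 * real n2 = 1"
  shows "Bbar ws wd n1 n2 nr1 nr2 *\<^sub>v xs = vec (nr1+nr2) (\<lambda>i. (\<lambda>b. if b
      then ws * (\<Sum>q<n1-nr1. xs $ q) + wd * (\<Sum>q\<in>{n1-nr1..<(n1-nr1)+(n2-nr2)}. xs $ q)
      else wd * (\<Sum>q<n1-nr1. xs $ q) + ws * (\<Sum>q\<in>{n1-nr1..<(n1-nr1)+(n2-nr2)}. xs $ q)) (i < nr1))"
proof (rule eq_vecI)
  fix p assume "p < dim_vec (vec (nr1+nr2) (\<lambda>i. (\<lambda>b. if b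
      then ws * (\<Sum>q<n1-nr1. xs $ q) + wd * (\<Sum>q\<in>{n1-nr1..<(n1-nr1)+(n2-nr2)}. xs $ q)
      else wd * (\<Sum>q<n1-nr1. xs $ q) + ws * (\<Sum>q\<in>{n1-nr1..<(n1-nr1)+(n2-nr2)}. xs $ q)) (i < nr1)))"
  then have p: "p < nr1+nr2" by simp
  note fp = reg_idx_facts[OF p assms(1,2)]
  let ?c = "\<lambda>q. if (p < nr1) = (q < n1 - nr1) then ws else wd"
  have "(Bbar ws wd n1 n2 nr1 nr2 *\<^sub>v xs) $ p = (\<Sum>q<(n1-nr1)+(n2-nr2). ?c q * xs $ q)"
    using p dx fp by (simp add: Bbar_def scalar_prod_def lessThan_atLeast0)
      (rule sum.cong, auto simp: wgt_def stub_idx_lt[OF _ assms(1)] fp Rbar_reg[OF fp(2) fp(1) stub_idx_facts(1)[OF _ assms(1,2) p] tot] stub_idx_facts(2)[OF _ assms(1,2) p])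
  also have "\<dots> = (\<Sum>q<n1-nr1. ?c q * xs $ q) + (\<Sum>q\<in>{n1-nr1..<(n1-nr1)+(n2-nr2)}. ?c q * xs $ q)"
    by (rule sum_split_r)
  also have "(\<Sum>q<n1-nr1. ?c q * xs $ q) = (if p < nr1 then ws else wd) * (\<Sum>q<n1-nr1. xs $ q)"
    by (simp add: sum_distrib_left)
  also have "(\<Sum>q\<in>{n1-nr1..<(n1-nr1)+(n2-nr2)}. ?c q * xs $ q) = (if p < nr1 then wd else ws) * (\<Sum>q\<in>{n1-nr1..<(n1-nr1)+(n2-nr2)}. xs $ q)"
    by (simp add: sum_distrib_left)
  finally show "(Bbar ws wd n1 n2 nr1 nr2 *\<^sub>v xs) $ p = vec (nr1+nr2) (\<lambda>i. (\<lambda>b. if b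
      then ws * (\<Sum>q<n1-nr1. xs $ q) + wd * (\<Sum>q\<in>{n1-nr1..<(n1-nr1)+(n2-nr2)}. xs $ q)
      else wd * (\<Sum>q<n1-nr1. xs $ q) + ws * (\<Sum>q\<in>{n1-nr1..<(n1-nr1)+(n2-nr2)}. xs $ q)) (i < nr1)) $ p"
    using p by simp
qed (simp add: Bbar_def)

lemma alg_core:
  fixes ws wd r1 r2 s1 s2 N1 N2 a1 a2 D t1 t2 tw S1 S2 T1 T2 :: real
  assumes hN1: "N1 = r1 + s1" and hN2: "N2 = r2 + s2"
    and a1: "a1 = ws * N1 + wd * N2" and a2: "a2 = ws * N2 + wd * N1"
    and D: "D = ws^2*s1*s2 + ws*wd*(N1*s1 + N2*s2) + wd^2*(N1*N2 - r1*r2)"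
    and T1: "T1 = -(ws*(ws*s2 + wd*(r1+s1)) + wd*wd*r2)"
    and T2: "T2 = -(ws*(ws*s1 + wd*(r2+s2)) + wd*wd*r1)"
    and t1: "t1 = T1/D" and t2: "t2 = T2/D"
    and tw: "tw = wd/D" and nz: "a1 \<noteq> 0" "a2 \<noteq> 0" "D \<noteq> 0"
  shows
    "a1 * (-t1/a1) + (-ws) * (1/a1) + r1 * (-ws) * (-t1/a1) + r2 * (-wd) * tw = 0" (is ?g1)
    "a1 * tw + (-wd) * (1/a2) + r1 * (-ws) * tw + r2 * (-wd) * (-t2/a2) = 0" (is ?g2)
    "a2 * tw + (-wd) * (1/a1) + r1 * (-wd) * (-t1/a1) + r2 * (-ws) * tw = 0" (is ?g3)
    "a2 * (-t2/a2) + (-ws) * (1/a2) + r1 * (-wd) * tw + r2 * (-ws) * (-t2/a2) = 0" (is ?g4)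
    "(1/a1) * (ws*S1 + wd*S2) + r1 * (-t1/a1) * (ws*S1 + wd*S2) + r2 * tw * (wd*S1 + ws*S2)
       = ((ws*wd*N1 + wd^2*r2 + ws^2*s2) * S1 + (wd*(wd*N1 + ws*N2)) * S2) / D" (is ?g5)
    "(1/a2) * (wd*S1 + ws*S2) + r1 * tw * (ws*S1 + wd*S2) + r2 * (-t2/a2) * (wd*S1 + ws*S2)
       = ((ws*wd*N2 + wd^2*r1 + ws^2*s1) * S2 + (wd*(wd*N2 + ws*N1)) * S1) / D" (is ?g6)
proof -
  have "a1 * (-t1/a1) + (-ws) * (1/a1) + r1 * (-ws) * (-t1/a1) + r2 * (-wd) * tw
      = (T1*(r1*ws - a1) - ws*D - a1*r2*wd*wd)/(a1*D)"
    using nz unfolding t1 tw by (simp add: field_simps)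
  also have "T1*(r1*ws - a1) - ws*D - a1*r2*wd*wd = 0"
    unfolding a1 D T1 by (simp add: algebra_simps hN1 hN2 power2_eq_square)
  finally show ?g1 by simp
  have "a1 * tw + (-wd) * (1/a2) + r1 * (-ws) * tw + r2 * (-wd) * (-t2/a2)
      = wd * (a2 * (a1 - r1*ws) - D + r2 * T2) / (a2 * D)"
    using nz unfolding t2 tw by (simp add: field_simps)
  also have "a2 * (a1 - r1*ws) - D + r2 * T2 = 0"
    unfolding a1 a2 D T2 by (simp add: algebra_simps hN1 hN2 power2_eq_square)
  finally show ?g2 by simp
  have "a2 * tw + (-wd) * (1/a1) + r1 * (-wd) * (-t1/a1) + r2 * (-ws) * tw
      = wd * (a1 * (a2 - r2*ws) - D + r1 * T1) / (a1 * D)"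
    using nz unfolding t1 tw by (simp add: field_simps)
  also have "a1 * (a2 - r2*ws) - D + r1 * T1 = 0"
    unfolding a1 a2 D T1 by (simp add: algebra_simps hN1 hN2 power2_eq_square)
  finally show ?g3 by simp
  have "a2 * (-t2/a2) + (-ws) * (1/a2) + r1 * (-wd) * tw + r2 * (-ws) * (-t2/a2)
      = (T2*(r2*ws - a2) - ws*D - a2*r1*wd*wd)/(a2*D)"
    using nz unfolding t2 tw by (simp add: field_simps)
  also have "T2*(r2*ws - a2) - ws*D - a2*r1*wd*wd = 0"
    unfolding a2 D T2 by (simp add: algebra_simps hN1 hN2 power2_eq_square)
  finally show ?g4 by simp
  have "(1/a1) * (ws*S1 + wd*S2) + r1 * (-t1/a1) * (ws*S1 + wd*S2) + r2 * tw * (wd*S1 + ws*S2)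
     = (D * (ws*S1 + wd*S2) - r1 * T1 * (ws*S1 + wd*S2) + r2 * wd * a1 * (wd*S1 + ws*S2)) / (a1 * D)"
    using nz unfolding t1 tw by (simp add: field_simps)
  also have "D * (ws*S1 + wd*S2) - r1 * T1 * (ws*S1 + wd*S2) + r2 * wd * a1 * (wd*S1 + ws*S2)
     = a1 * ((ws*wd*N1 + wd^2*r2 + ws^2*s2) * S1 + (wd*(wd*N1 + ws*N2)) * S2)"
    unfolding a1 D T1 by (simp add: algebra_simps hN1 hN2 power2_eq_square)
  finally show ?g5 using nz by simp
  have "(1/a2) * (wd*S1 + ws*S2) + r1 * tw * (ws*S1 + wd*S2) + r2 * (-t2/a2) * (wd*S1 + ws*S2)
     = (D * (wd*S1 + ws*S2) + r1 * wd * a2 * (ws*S1 + wd*S2) - r2 * T2 * (wd*S1 + ws*S2)) / (a2 * D)"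
    using nz unfolding t2 tw by (simp add: field_simps)
  also have "D * (wd*S1 + ws*S2) + r1 * wd * a2 * (ws*S1 + wd*S2) - r2 * T2 * (wd*S1 + ws*S2)
     = a2 * ((ws*wd*N2 + wd^2*r1 + ws^2*s1) * S2 + (wd*(wd*N2 + ws*N1)) * S1)"
    unfolding a2 D T2 by (simp add: algebra_simps hN1 hN2 power2_eq_square)
  finally show ?g6 using nz by simp
qed

lemma pos_facts:
  fixes ws wd r1 r2 s1 s2 N1 N2 :: real
  assumes pos: "ws > 0" "wd > 0" "r1 > 0" "r2 > 0" "s1 \<ge> 0" "s2 \<ge> 0" "s1 + s2 > 0"
    and hN1: "N1 = r1 + s1" and hN2: "N2 = r2 + s2"
  shows "ws^2*s1*s2 + ws*wd*(N1*s1 + N2*s2) + wd^2*(N1*N2 - r1*r2) > 0"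
    "ws * N1 + wd * N2 > 0" "ws * N2 + wd * N1 > 0"
proof -
  have "N1*N2 - r1*r2 \<ge> 0" using pos unfolding hN1 hN2 by (simp add: algebra_simps)
  moreover have "N1*s1 + N2*s2 > 0"
  proof (cases "s1 > 0")
    case True then show ?thesis using pos unfolding hN1 hN2 by (simp add: add_pos_nonneg)
  next
    case False then have "s2 > 0" using pos by simp
    then show ?thesis using pos unfolding hN1 hN2 by (simp add: add_nonneg_pos)
  qed
  ultimately have "wd^2*(N1*N2 - r1*r2) \<ge> 0" "ws*wd*(N1*s1 + N2*s2) > 0"
    using pos by auto
  moreover have "ws^2*s1*s2 \<ge> 0" using pos by auto
  ultimately show "ws^2*s1*s2 + ws*wd*(N1*s1 + N2*s2) + wd^2*(N1*N2 - r1*r2) > 0" by linarith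
  show "ws * N1 + wd * N2 > 0" "ws * N2 + wd * N1 > 0" unfolding hN1 hN2 using pos
    by (auto intro!: add_pos_pos add_pos_nonneg mult_pos_pos)
qed

lemma vec_res:
  fixes a1 a2 t1 t2 tw cT cF X1 X2 :: real
  assumes E1: "(1/a1) * cT + real r1 * (-t1/a1) * cT + real r2 * tw * cF = X1"
    and E2: "(1/a2) * cF + real r1 * tw * cT + real r2 * (-t2/a2) * cF = X2"
  shows "bm r1 r2 (\<lambda>b. if b then 1/a1 else 1/a2) (\<lambda>x y. if x \<and> y then - t1/a1 else if \<not> x \<and> \<not> y then - t2/a2 else tw)
     *\<^sub>v vec (r1+r2) (\<lambda>j. (\<lambda>b. if b then cT else cF) (j<r1))
     = (X1 \<cdot>\<^sub>v ones_vec r1) @\<^sub>v (X2 \<cdot>\<^sub>v ones_vec r2)"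
  unfolding bm_mult_vec[where c="\<lambda>b. if b then cT else cF"]
  apply (rule eq_vecI)
  subgoal for i using E1 E2 by (cases "i < r1") (simp_all add: ones_vec_def algebra_simps)
  by (simp add: ones_vec_def)

lemma blocks_inv:
  fixes a1 a2 t1 t2 tw ws wd :: real
  assumes C1: "a1 * (-t1/a1) + (-ws) * (1/a1) + real r1 * (-ws) * (-t1/a1) + real r2 * (-wd) * tw = 0"
    and C2: "a1 * tw + (-wd) * (1/a2) + real r1 * (-ws) * tw + real r2 * (-wd) * (-t2/a2) = 0"
    and C3: "a2 * tw + (-wd) * (1/a1) + real r1 * (-wd) * (-t1/a1) + real r2 * (-ws) * tw = 0"
    and C4: "a2 * (-t2/a2) + (-ws) * (1/a2) + real r1 * (-wd) * tw + real r2 * (-ws) * (-t2/a2) = 0"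
    and nz: "a1 \<noteq> 0" "a2 \<noteq> 0"
  shows "bm r1 r2 (\<lambda>b. if b then a1 else a2) (\<lambda>x y. - (if x = y then ws else wd))
       * bm r1 r2 (\<lambda>b. if b then 1/a1 else 1/a2) (\<lambda>x y. if x \<and> y then - t1/a1 else if \<not> x \<and> \<not> y then - t2/a2 else tw)
       = 1\<^sub>m (r1+r2)"
    "bm r1 r2 (\<lambda>b. if b then 1/a1 else 1/a2) (\<lambda>x y. if x \<and> y then - t1/a1 else if \<not> x \<and> \<not> y then - t2/a2 else tw)
       * bm r1 r2 (\<lambda>b. if b then a1 else a2) (\<lambda>x y. - (if x = y then ws else wd))
       = 1\<^sub>m (r1+r2)"
proof -
  show "bm r1 r2 (\<lambda>b. if b then a1 else a2) (\<lambda>x y. - (if x = y then ws else wd))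
       * bm r1 r2 (\<lambda>b. if b then 1/a1 else 1/a2) (\<lambda>x y. if x \<and> y then - t1/a1 else if \<not> x \<and> \<not> y then - t2/a2 else tw)
       = 1\<^sub>m (r1+r2)"
    unfolding bm_mult one_bm
  proof (rule bm_cong)
    fix x show "(if x then a1 else a2) * (if x then 1/a1 else 1/a2) = 1" using nz by auto
  next
    fix x y :: bool
    show "(if x then a1 else a2) * (if x \<and> y then - t1/a1 else if \<not> x \<and> \<not> y then - t2/a2 else tw)
      + - (if x = y then ws else wd) * (if y then 1/a1 else 1/a2)
      + real r1 * - (if x = True then ws else wd) * (if True \<and> y then - t1/a1 else if \<not> True \<and> \<not> y then - t2/a2 else tw)
      + real r2 * - (if x = False then ws else wd) * (if False \<and> y then - t1/a1 else if \<not> False \<and> \<not> y then - t2/a2 else tw) = 0"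
      using C1 C2 C3 C4 nz by (cases x; cases y) (simp_all add: algebra_simps)
  qed
  show "bm r1 r2 (\<lambda>b. if b then 1/a1 else 1/a2) (\<lambda>x y. if x \<and> y then - t1/a1 else if \<not> x \<and> \<not> y then - t2/a2 else tw)
       * bm r1 r2 (\<lambda>b. if b then a1 else a2) (\<lambda>x y. - (if x = y then ws else wd))
       = 1\<^sub>m (r1+r2)"
    unfolding bm_mult one_bm
  proof (rule bm_cong)
    fix x show "(if x then 1/a1 else 1/a2) * (if x then a1 else a2) = 1" using nz by auto
  next
    fix x y :: bool
    show "(if x then 1/a1 else 1/a2) * - (if x = y then ws else wd)
      + (if x \<and> y then - t1/a1 else if \<not> x \<and> \<not> y then - t2/a2 else tw) * (if y then a1 else a2)
      + real r1 * (if x \<and> True then - t1/a1 else if \<not> x \<and> \<not> True then - t2/a2 else tw) * - (if True = y then ws else wd)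
      + real r2 * (if x \<and> False then - t1/a1 else if \<not> x \<and> \<not> False then - t2/a2 else tw) * - (if False = y then ws else wd) = 0"
      using C1 C2 C3 C4 nz by (cases x; cases y) (simp_all add: algebra_simps)
  qed
qed

theorem theorem3:
  fixes n1 n2 nr1 nr2 :: nat and ws wd :: real and xs :: "real vec"
  assumes "0 < nr1" "nr1 \<le> n1" "0 < nr2" "nr2 \<le> n2" "nr1 + nr2 < n1 + n2"
    and "ws > 0" "wd > 0" "ws \<noteq> wd"
    and "ws * (real n1 ^ 2 + real n2 ^ 2) + 2 * wd * real n1 * real n2 = 1"
    and "dim_vec xs = (n1 - nr1) + (n2 - nr2)"
  shows "let ns1 = n1 - nr1; ns2 = n2 - nr2;
             a1 = ws * real n1 + wd * real n2; a2 = ws * real n2 + wd * real n1;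
             S1 = (\<Sum>q<ns1. xs $ q); S2 = (\<Sum>q\<in>{ns1..<ns1+ns2}. xs $ q);
             g11 = ws*wd*real n1 + wd^2*real nr2 + ws^2*real ns2;
             g12 = wd*(wd*real n1 + ws*real n2);
             g21 = ws*wd*real n2 + wd^2*real nr1 + ws^2*real ns1;
             g22 = wd*(wd*real n2 + ws*real n1);
             \<delta> = ws^2*real ns1*real ns2 + ws*wd*(real n1*real ns1 + real n2*real ns2)
                 + wd^2*(real n1*real n2 - real nr1*real nr2);
             \<chi>1 = (g11*S1 + g12*S2) / \<delta>; \<chi>2 = (g21*S2 + g22*S1) / \<delta>;
             IA = 1\<^sub>m (nr1+nr2) - Abar ws wd n1 n2 nr1 nr2
         in \<exists>tws1 tws2 twd.
              (let M = four_block_mat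
                   ((1/a1) \<cdot>\<^sub>m (1\<^sub>m nr1 - tws1 \<cdot>\<^sub>m outer (ones_vec nr1) (ones_vec nr1)))
                   (twd \<cdot>\<^sub>m outer (ones_vec nr1) (ones_vec nr2))
                   (twd \<cdot>\<^sub>m outer (ones_vec nr2) (ones_vec nr1))
                   ((1/a2) \<cdot>\<^sub>m (1\<^sub>m nr2 - tws2 \<cdot>\<^sub>m outer (ones_vec nr2) (ones_vec nr2)))
               in inverts_mat IA M \<and> inverts_mat M IA \<and>
                  M *\<^sub>v (Bbar ws wd n1 n2 nr1 nr2 *\<^sub>v xs)
                    = (\<chi>1 \<cdot>\<^sub>v ones_vec nr1) @\<^sub>v (\<chi>2 \<cdot>\<^sub>v ones_vec nr2))"
proof -
  let ?r1 = "real nr1" and ?r2 = "real nr2" and ?s1 = "real (n1 - nr1)" and ?s2 = "real (n2 - nr2)"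
  let ?N1 = "real n1" and ?N2 = "real n2"
  let ?a1 = "ws * real n1 + wd * real n2" and ?a2 = "ws * real n2 + wd * real n1"
  let ?S1 = "\<Sum>q<n1 - nr1. xs $ q" and ?S2 = "\<Sum>q\<in>{n1 - nr1..<(n1 - nr1)+(n2 - nr2)}. xs $ q"
  let ?D = "ws^2*real (n1 - nr1)*real (n2 - nr2) + ws*wd*(real n1*real (n1 - nr1) + real n2*real (n2 - nr2))
                 + wd^2*(real n1*real n2 - real nr1*real nr2)"
  let ?T1 = "-(ws*(ws*?s2 + wd*(?r1+?s1)) + wd*wd*?r2)"
  let ?T2 = "-(ws*(ws*?s1 + wd*(?r2+?s2)) + wd*wd*?r1)"
  let ?t1 = "?T1 / ?D" and ?t2 = "?T2 / ?D" and ?tw = "wd / ?D"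
  let ?chi1 = "((ws*wd*real n1 + wd^2*real nr2 + ws^2*real (n2 - nr2))*?S1 + (wd*(wd*real n1 + ws*real n2))*?S2) / ?D"
  let ?chi2 = "((ws*wd*real n2 + wd^2*real nr1 + ws^2*real (n1 - nr1))*?S2 + (wd*(wd*real n2 + ws*real n1))*?S1) / ?D"
  let ?dI = "\<lambda>b. if b then ?a1 else ?a2" and ?eI = "\<lambda>x y. - (if x = y then ws else wd)"
  let ?dM = "\<lambda>b. if b then 1/?a1 else 1/?a2"
  let ?eM = "\<lambda>x y. if x \<and> y then - ?t1/?a1 else if \<not> x \<and> \<not> y then - ?t2/?a2 else ?tw"
  let ?c = "\<lambda>b. if b then ws * ?S1 + wd * ?S2 else wd * ?S1 + ws * ?S2"
  let ?M = "four_block_mat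
                   ((1/?a1) \<cdot>\<^sub>m (1\<^sub>m nr1 - ?t1 \<cdot>\<^sub>m outer (ones_vec nr1) (ones_vec nr1)))
                   (?tw \<cdot>\<^sub>m outer (ones_vec nr1) (ones_vec nr2))
                   (?tw \<cdot>\<^sub>m outer (ones_vec nr2) (ones_vec nr1))
                   ((1/?a2) \<cdot>\<^sub>m (1\<^sub>m nr2 - ?t2 \<cdot>\<^sub>m outer (ones_vec nr2) (ones_vec nr2)))"
  let ?IA = "1\<^sub>m (nr1+nr2) - Abar ws wd n1 n2 nr1 nr2"
  have hN1: "?N1 = ?r1 + ?s1" and hN2: "?N2 = ?r2 + ?s2" using assms(2,4) by auto
  have spos: "?s1 + ?s2 > 0" using assms(5) by auto
  note pf = pos_facts[of ws wd ?r1 ?r2 ?s1 ?s2 ?N1 ?N2, OF assms(6,7) _ _ _ _ spos hN1 hN2]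
  have Dp: "?D > 0" and a1p: "?a1 > 0" and a2p: "?a2 > 0" using pf assms(1,3) by auto
  note core = alg_core[of ?N1 ?r1 ?s1 ?N2 ?r2 ?s2 ?a1 ws wd ?a2 ?D ?T1 ?T2 ?t1 ?t2 ?tw,
      OF hN1 hN2 refl refl refl refl refl refl refl refl]
  have nz: "?a1 \<noteq> 0" "?a2 \<noteq> 0" "?D \<noteq> 0" using Dp a1p a2p by auto
  note C = core[OF nz]
  have IA: "?IA = bm nr1 nr2 ?dI ?eI"
    unfolding IA_bm[OF assms(2,4,9)] by (rule bm_cong) auto
  have M: "?M = bm nr1 nr2 ?dM ?eM"
    by (rule M_bm)
  note P = blocks_inv[OF C(1-4) nz(1,2)]
  have BV: "Bbar ws wd n1 n2 nr1 nr2 *\<^sub>v xs = vec (nr1+nr2) (\<lambda>j. ?c (j<nr1))"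
    using Bbar_vec[OF assms(2,4,10,9)] by simp
  note V = vec_res[OF C(5)[of ?S1 ?S2] C(6)[of ?S1 ?S2]]
  have main: "inverts_mat ?IA ?M \<and> inverts_mat ?M ?IA \<and>
      ?M *\<^sub>v (Bbar ws wd n1 n2 nr1 nr2 *\<^sub>v xs) = (?chi1 \<cdot>\<^sub>v ones_vec nr1) @\<^sub>v (?chi2 \<cdot>\<^sub>v ones_vec nr2)"
    unfolding inverts_mat_def IA M BV V using P by (simp add: bm_def)
  show ?thesis unfolding Let_def
    by (rule exI[of _ ?t1], rule exI[of _ ?t2], rule exI[of _ ?tw]) (rule main)
qed

end
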